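(* There exists a set $A\subseteq\omega^\omega$ (e.g. $A=\{\bar 0\}$, the singleton of the all-zero sequence) such that both $A$ and its complement $\omega^\omega\setminus A$ are computably enumerable in Kleene's second model $\mathcal{K}_2$, but $A$ is not decidable in $\mathcal{K}_2$.
   Context: Kleene's second model $\mathcal{K}_2$ is the pca with underlying set $\omega^\omega$ in which $\alpha\cdot\beta$ is the result of applying the continuous (partial) functional coded by $\alpha$ to $\beta$. In a pca $\mathcal{A}$, with $\mathsf{true}=k$ and $\mathsf{false}=ki$ ($i=skk$, where $k,s$ are the standard combinators), a set $A\subseteq\mathcal{A}$ is decidable if there is a total $c\in\mathcal{A}$ with $ca=\mathsf{true}$ iff $a\in A$ and $ca=\mathsf{false}$ iff $a\notin A$; $A$ is computably enumerable (c.e.) in $\mathcal{A}$ if $A=\{a\mid ea\downarrow\}$ for some $e\in\mathcal{A}$. *)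

theory Defs
  imports Main "HOL-Library.Nat_Bijection"
begin

text \<open>A partial applicative structure is given by an application
  app :: 'a => 'a => 'a option  (None = undefined).
  Application of possibly undefined terms (strict, Kleene style):\<close>

definition appo :: "('a \<Rightarrow> 'a \<Rightarrow> 'a option) \<Rightarrow> 'a option \<Rightarrow> 'a option \<Rightarrow> 'a option" where
  "appo app x y = (case x of None \<Rightarrow> None | Some a \<Rightarrow>
                    (case y of None \<Rightarrow> None | Some b \<Rightarrow> app a b))"

definition is_K :: "('a \<Rightarrow> 'a \<Rightarrow> 'a option) \<Rightarrow> 'a \<Rightarrow> bool" where
  "is_K app k \<longleftrightarrow> (\<forall>a b. appo app (appo app (Some k) (Some a)) (Some b) = Some a)"

definition is_S :: "('a \<Rightarrow> 'a \<Rightarrow> 'a option) \<Rightarrow> 'a \<Rightarrow> bool" where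
  "is_S app s \<longleftrightarrow> (\<forall>a b. appo app (appo app (Some s) (Some a)) (Some b) \<noteq> None \<and>
      (\<forall>c. appo app (appo app (appo app (Some s) (Some a)) (Some b)) (Some c) =
           appo app (appo app (Some a) (Some c)) (appo app (Some b) (Some c))))"

definition pca_i :: "('a \<Rightarrow> 'a \<Rightarrow> 'a option) \<Rightarrow> 'a \<Rightarrow> 'a \<Rightarrow> 'a" where
  "pca_i app k s = the (appo app (appo app (Some s) (Some k)) (Some k))"

definition pca_true :: "('a \<Rightarrow> 'a \<Rightarrow> 'a option) \<Rightarrow> 'a \<Rightarrow> 'a \<Rightarrow> 'a" where
  "pca_true app k s = k"

definition pca_false :: "('a \<Rightarrow> 'a \<Rightarrow> 'a option) \<Rightarrow> 'a \<Rightarrow> 'a \<Rightarrow> 'a" where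
  "pca_false app k s = the (app k (pca_i app k s))"

definition pca_decidable :: "('a \<Rightarrow> 'a \<Rightarrow> 'a option) \<Rightarrow> 'a \<Rightarrow> 'a \<Rightarrow> 'a set \<Rightarrow> bool" where
  "pca_decidable app k s A \<longleftrightarrow> (\<exists>c. (\<forall>a. app c a \<noteq> None) \<and>
      (\<forall>a. app c a = Some (pca_true app k s) \<longleftrightarrow> a \<in> A) \<and>
      (\<forall>a. app c a = Some (pca_false app k s) \<longleftrightarrow> a \<notin> A))"

definition pca_ce :: "('a \<Rightarrow> 'a \<Rightarrow> 'a option) \<Rightarrow> 'a set \<Rightarrow> bool" where
  "pca_ce app A \<longleftrightarrow> (\<exists>e. A = {a. app e a \<noteq> None})"

text \<open>Standard definition: with finite sequences coded by list_encode,
  (alpha . beta)(n) = alpha(<n, beta 0, ..., beta (m-1)>) - 1 where m is least with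
  alpha(<n, beta 0, ..., beta (m-1)>) > 0; alpha . beta is defined iff such m
  exists for every n.\<close>

definition K2_code :: "(nat \<Rightarrow> nat) \<Rightarrow> nat \<Rightarrow> nat \<Rightarrow> nat" where
  "K2_code \<beta> n m = list_encode (n # map \<beta> [0..<m])"

definition K2_app :: "(nat \<Rightarrow> nat) \<Rightarrow> (nat \<Rightarrow> nat) \<Rightarrow> (nat \<Rightarrow> nat) option" where
  "K2_app \<alpha> \<beta> =
     (if (\<forall>n. \<exists>m. \<alpha> (K2_code \<beta> n m) > 0)
      then Some (\<lambda>n. \<alpha> (K2_code \<beta> n (LEAST m. \<alpha> (K2_code \<beta> n m) > 0)) - 1)
      else None)"

end

theory Submission
  imports Defs
begin

definition eA :: "nat \<Rightarrow> nat" where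
  "eA x = (case list_decode x of [] \<Rightarrow> 0 | n # xs \<Rightarrow>
     if length xs = n \<and> (\<forall>y\<in>set xs. y = 0) then 1 else 0)"

definition eB :: "nat \<Rightarrow> nat" where
  "eB x = (case list_decode x of [] \<Rightarrow> 0 | n # xs \<Rightarrow>
     if (\<exists>y\<in>set xs. y \<noteq> 0) then 1 else 0)"

lemma eA_code: "eA (K2_code \<beta> n m) > 0 \<longleftrightarrow> m = n \<and> (\<forall>i<n. \<beta> i = 0)"
  by (auto simp: eA_def K2_code_def list_encode_inverse)

lemma eB_code: "eB (K2_code \<beta> n m) > 0 \<longleftrightarrow> (\<exists>i<m. \<beta> i \<noteq> 0)"
  by (auto simp: eB_def K2_code_def list_encode_inverse)

lemma ceA: "pca_ce K2_app {\<lambda>_. 0}"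
  unfolding pca_ce_def
proof (intro exI[of _ eA] set_eqI iffI)
  fix \<beta> :: "nat \<Rightarrow> nat" assume "\<beta> \<in> {\<lambda>_. 0::nat}"
  then show "\<beta> \<in> {a. K2_app eA a \<noteq> None}"
    by (auto simp: K2_app_def eA_code)
next
  fix \<beta> :: "nat \<Rightarrow> nat" assume "\<beta> \<in> {a. K2_app eA a \<noteq> None}"
  then have h: "\<forall>n. \<forall>i<n. \<beta> i = 0"
    by (auto simp: K2_app_def eA_code split: if_splits)
  have "\<beta> = (\<lambda>_. 0)"
  proof
    fix i show "\<beta> i = 0" using h lessI by blast
  qed
  then show "\<beta> \<in> {\<lambda>_. 0}" by simp
qed

lemma ceB: "pca_ce K2_app (- {\<lambda>_. 0})"
  unfolding pca_ce_def
proof (intro exI[of _ eB] set_eqI iffI)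
  fix \<beta> :: "nat \<Rightarrow> nat" assume "\<beta> \<in> - {\<lambda>_. 0}"
  then obtain i where "\<beta> i \<noteq> 0" by auto
  then have "\<forall>n. \<exists>m. eB (K2_code \<beta> n m) > 0"
    using eB_code by (metis lessI)
  then show "\<beta> \<in> {a. K2_app eB a \<noteq> None}"
    by (auto simp: K2_app_def)
next
  fix \<beta> :: "nat \<Rightarrow> nat" assume "\<beta> \<in> {a. K2_app eB a \<noteq> None}"
  then have "\<exists>m. eB (K2_code \<beta> 0 m) > 0"
    by (auto simp: K2_app_def split: if_splits)
  then show "\<beta> \<in> - {\<lambda>_. 0}" by (auto simp: eB_code)
qed

lemma true_ne_false:
  assumes "is_K K2_app k"
  shows "pca_true K2_app k s \<noteq> pca_false K2_app k s"
proof
  assume eq: "pca_true K2_app k s = pca_false K2_app k s"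
  let ?i = "pca_i K2_app k s"
  have K: "\<And>a b. appo K2_app (appo K2_app (Some k) (Some a)) (Some b) = Some a"
    using assms by (simp add: is_K_def)
  have "K2_app k ?i \<noteq> None"
    using K[of ?i "\<lambda>_. 0"] by (auto simp: appo_def split: option.splits)
  then have ki: "K2_app k ?i = Some k"
    using eq by (auto simp: pca_true_def pca_false_def)
  have kb: "\<And>b. K2_app k b = Some ?i"
    using K[of ?i] ki by (simp add: appo_def)
  have "\<And>a. appo K2_app (Some ?i) (Some (\<lambda>_. 0)) = Some a"
    using K kb by (simp add: appo_def)
  from this[of "\<lambda>_. 0"] this[of "\<lambda>_. 1"] show False
    by (metis option.inject zero_neq_one)
qed

lemma notdec:
  assumes "is_K K2_app k"
  shows "\<not> pca_decidable K2_app k s {\<lambda>_. 0}"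
proof
  assume "pca_decidable K2_app k s {\<lambda>_. 0}"
  then obtain c where tot: "\<And>a. K2_app c a \<noteq> None"
    and ct: "\<And>a. K2_app c a = Some (pca_true K2_app k s) \<longleftrightarrow> a \<in> {\<lambda>_. 0}"
    and cf: "\<And>a. K2_app c a = Some (pca_false K2_app k s) \<longleftrightarrow> a \<notin> {\<lambda>_. 0}"
    unfolding pca_decidable_def by blast
  let ?Z = "\<lambda>_::nat. 0::nat"
  let ?t = "pca_true K2_app k s" and ?f = "pca_false K2_app k s"
  have "?t \<noteq> ?f" using true_ne_false[OF assms] .
  then obtain n0 where n0: "?t n0 \<noteq> ?f n0" by auto
  have cZ: "K2_app c ?Z = Some ?t" using ct by simp
  have exZ: "\<forall>n. \<exists>m. c (K2_code ?Z n m) > 0"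
    using tot[of ?Z] by (auto simp: K2_app_def split: if_splits)
  define m where "m = (LEAST m. c (K2_code ?Z n0 m) > 0)"
  have cm: "c (K2_code ?Z n0 m) > 0"
    unfolding m_def using exZ by (meson LeastI_ex)
  have cless: "\<And>m'. m' < m \<Longrightarrow> \<not> c (K2_code ?Z n0 m') > 0"
    unfolding m_def using not_less_Least by blast
  have tval: "?t n0 = c (K2_code ?Z n0 m) - 1"
    using cZ exZ unfolding K2_app_def m_def by (metis (no_types, lifting) option.inject)
  define \<beta> where "\<beta> = ?Z(m := 1)"
  have same: "\<And>m'. m' \<le> m \<Longrightarrow> K2_code \<beta> n0 m' = K2_code ?Z n0 m'"
    by (auto simp: K2_code_def \<beta>_def)
  have "\<beta> \<noteq> ?Z" by (metis \<beta>_def fun_upd_same zero_neq_one)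
  then have cB: "K2_app c \<beta> = Some ?f" using cf by simp
  have exB: "\<forall>n. \<exists>m. c (K2_code \<beta> n m) > 0"
    using tot[of \<beta>] by (auto simp: K2_app_def split: if_splits)
  have L: "(LEAST m'. c (K2_code \<beta> n0 m') > 0) = m"
  proof (rule Least_equality)
    show "c (K2_code \<beta> n0 m) > 0" using same[of m] cm by simp
  next
    fix y assume "c (K2_code \<beta> n0 y) > 0"
    then show "m \<le> y" using same cless by (metis less_imp_le_nat not_le)
  qed
  have "?f n0 = c (K2_code \<beta> n0 m) - 1"
    using cB exB L unfolding K2_app_def by (metis (no_types, lifting) option.inject)
  then have "?f n0 = ?t n0" using tval same[of m] by simp
  then show False using n0 by simp
qed

theorem mainTheorem4:
  shows "\<exists>A :: (nat \<Rightarrow> nat) set.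
           pca_ce K2_app A \<and> pca_ce K2_app (- A) \<and>
           (\<forall>k s. is_K K2_app k \<longrightarrow> is_S K2_app s \<longrightarrow> \<not> pca_decidable K2_app k s A)"
  using ceA ceB notdec by blast

end
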